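(* Let $\mathscr{H}$ be a finite-dimensional complex Hilbert space, let $A=\{a_k\}_{k=1}^{m}$ be a tight frame of $\mathscr{H}$ with frame bound $\alpha>0$ and $B=\{b_j\}_{j=1}^{n}$ a tight frame of $\mathscr{H}$ with frame bound $\beta>0$, and suppose $A$ and $B$ are $s$-order incompatible. Write $I=\{1,\dots,m\}$, $J=\{1,\dots,n\}$. For nonempty $S\subseteq I$, $T\subseteq J$ let $C_{S,T}$ be the optimal lower frame bound of the family $\{a_k\}_{k\in S^c}\cup\{b_j\}_{j\in T^c}$, i.e. the largest $C\ge 0$ with $C\|x\|^2\le\sum_{k\in S^c}|\langle x,a_k\rangle|^2+\sum_{j\in T^c}|\langle x,b_j\rangle|^2$ for all $x\in\mathscr{H}$, and let $C_s=\min\{C_{S,T}: S\subseteq I,\ T\subseteq J \text{ nonempty},\ |S|+|T|<s\}$ (with $C_s=+\infty$ if no such pair exists). Then $C_s>0$, and with $C=1/\min\{\alpha,\beta,C_s\}$, for all subsets $S\subseteq I$, $T\subseteq J$ with $|S|+|T|<s$ and all $x\in\mathscr{H}$, $$\|x\|^2\le C\Big(\sum_{k\in S^c}|\langle x,a_k\rangle|^2+\sum_{j\in T^c}|\langle x,b_j\rangle|^2\Big).$$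
   Context: A finite family $\{a_k\}_{k=1}^{m}\subset\mathscr{H}$ is a tight frame with frame bound $\alpha>0$ if $\sum_{k=1}^{m}|\langle x,a_k\rangle|^2=\alpha\|x\|^2$ for all $x\in\mathscr{H}$. The tight frames $A$ (bound $\alpha$) and $B$ (bound $\beta$) are called $s$-order incompatible, for an integer $s$, if: (1) for all nonempty $S\subseteq I$, $T\subseteq J$ with $|S|+|T|<s$ and every nonzero $x\in\mathscr{H}$, the two equalities $\sum_{k\in S}|\langle x,a_k\rangle|^2=\alpha\|x\|^2$ and $\sum_{j\in T}|\langle x,b_j\rangle|^2=\beta\|x\|^2$ do not both hold; and (2) there exist nonempty $S\subseteq I$, $T\subseteq J$ with $|S|+|T|=s$ and a nonzero $x\in\mathscr{H}$ for which both equalities hold. $S^c=I\setminus S$, $T^c=J\setminus T$. *)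

theory Defs
  imports "HOL-Analysis.Analysis"
begin

text \<open>A finite-dimensional complex Hilbert space is modelled (up to isometric
isomorphism) as complex^'d with the standard inner product, linear in the
first argument.\<close>

definition cinner :: "complex^'d \<Rightarrow> complex^'d \<Rightarrow> complex" where
  "cinner x y = (\<Sum>i\<in>UNIV. x$i * cnj (y$i))"

definition frame_sum :: "(nat \<Rightarrow> complex^'d) \<Rightarrow> nat set \<Rightarrow> complex^'d \<Rightarrow> real" where
  "frame_sum a K x = (\<Sum>k\<in>K. (cmod (cinner x (a k)))^2)"

definition tight_frame :: "(nat \<Rightarrow> complex^'d) \<Rightarrow> nat \<Rightarrow> real \<Rightarrow> bool" where
  "tight_frame a m \<alpha> \<longleftrightarrow> \<alpha> > 0 \<and> (\<forall>x. frame_sum a {1..m} x = \<alpha> * (norm x)^2)"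

definition s_order_incompatible ::
  "(nat \<Rightarrow> complex^'d) \<Rightarrow> nat \<Rightarrow> real \<Rightarrow> (nat \<Rightarrow> complex^'d) \<Rightarrow> nat \<Rightarrow> real \<Rightarrow> nat \<Rightarrow> bool" where
  "s_order_incompatible a m \<alpha> b n \<beta> s \<longleftrightarrow>
     (\<forall>S T x. S \<subseteq> {1..m} \<and> T \<subseteq> {1..n} \<and> S \<noteq> {} \<and> T \<noteq> {} \<and> card S + card T < s \<and> x \<noteq> 0
        \<longrightarrow> \<not> (frame_sum a S x = \<alpha> * (norm x)^2 \<and> frame_sum b T x = \<beta> * (norm x)^2)) \<and>
     (\<exists>S T x. S \<subseteq> {1..m} \<and> T \<subseteq> {1..n} \<and> S \<noteq> {} \<and> T \<noteq> {} \<and> card S + card T = s \<and> x \<noteq> 0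
        \<and> frame_sum a S x = \<alpha> * (norm x)^2 \<and> frame_sum b T x = \<beta> * (norm x)^2)"

definition opt_lower_bound ::
  "(nat \<Rightarrow> complex^'d) \<Rightarrow> nat set \<Rightarrow> (nat \<Rightarrow> complex^'d) \<Rightarrow> nat set \<Rightarrow> real" where
  "opt_lower_bound a K b L =
     (GREATEST C. C \<ge> 0 \<and> (\<forall>x. C * (norm x)^2 \<le> frame_sum a K x + frame_sum b L x))"

definition C_ST ::
  "(nat \<Rightarrow> complex^'d) \<Rightarrow> nat \<Rightarrow> (nat \<Rightarrow> complex^'d) \<Rightarrow> nat \<Rightarrow> nat set \<Rightarrow> nat set \<Rightarrow> real" where
  "C_ST a m b n S T = opt_lower_bound a ({1..m} - S) b ({1..n} - T)"

definition C_s ::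
  "(nat \<Rightarrow> complex^'d) \<Rightarrow> nat \<Rightarrow> (nat \<Rightarrow> complex^'d) \<Rightarrow> nat \<Rightarrow> nat \<Rightarrow> ereal" where
  "C_s a m b n s =
     (let P = {(S, T). S \<subseteq> {1..m} \<and> T \<subseteq> {1..n} \<and> S \<noteq> {} \<and> T \<noteq> {} \<and> card S + card T < s}
      in if P = {} then \<infinity> else Min ((\<lambda>(S, T). ereal (C_ST a m b n S T)) ` P))"

end

theory Submission
  imports Defs
begin

lemma cinner_scale: "cinner (r *\<^sub>R x) y = of_real r * cinner x y"
  unfolding cinner_def vector_scaleR_component by (simp add: sum_distrib_left scaleR_conv_of_real mult.assoc)

lemma frame_sum_scale: "frame_sum a K (r *\<^sub>R x) = r^2 * frame_sum a K x"
  unfolding frame_sum_def cinner_scale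
  by (simp add: sum_distrib_left norm_mult power_mult_distrib)

lemma frame_sum_nonneg: "frame_sum a K x \<ge> 0"
  unfolding frame_sum_def by (simp add: sum_nonneg)

lemma cont_cinner: "continuous_on UNIV (\<lambda>x. cinner x y)"
  unfolding cinner_def by (intro continuous_intros)

lemma cont_frame_sum: "continuous_on UNIV (\<lambda>x. frame_sum a K x)"
  unfolding frame_sum_def
  by (intro continuous_intros continuous_on_compose2[OF _ cont_cinner]) auto

lemma frame_sum_zero:
  assumes "finite K" "frame_sum a K x = 0" "k \<in> K"
  shows "cinner x (a k) = 0"
proof -
  have "(cmod (cinner x (a k)))^2 = 0"
    using assms sum_nonneg_eq_0_iff[of K "\<lambda>k. (cmod (cinner x (a k)))^2"]
    unfolding frame_sum_def by auto
  then show ?thesis by simp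
qed

lemma opt_lb:
  fixes a b :: "nat \<Rightarrow> complex^'d"
  obtains x0 where "norm x0 = 1" "opt_lower_bound a K b L = frame_sum a K x0 + frame_sum b L x0"
    "\<forall>x. (frame_sum a K x0 + frame_sum b L x0) * (norm x)^2 \<le> frame_sum a K x + frame_sum b L x"
proof -
  define f where "f \<equiv> \<lambda>x. frame_sum a K x + frame_sum b L x"
  have cs: "compact (sphere (0::complex^'d) 1)" by simp
  obtain e :: "complex^'d" where "norm e = 1" using vector_choose_size[of 1] by auto
  then have ne: "sphere (0::complex^'d) 1 \<noteq> {}" by auto
  have cf: "continuous_on (sphere 0 1) f" unfolding f_def
    by (intro continuous_on_add continuous_on_subset[OF cont_frame_sum]) auto
  obtain x0 where x0: "x0 \<in> sphere 0 1" "\<forall>y\<in>sphere 0 1. f x0 \<le> f y"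
    using continuous_attains_inf[OF cs ne cf] by blast
  have hom: "f (r *\<^sub>R x) = r^2 * f x" for r x
    unfolding f_def frame_sum_scale by (simp add: algebra_simps)
  have fnn: "f x \<ge> 0" for x unfolding f_def by (rule add_nonneg_nonneg[OF frame_sum_nonneg frame_sum_nonneg])
  have bound: "f x0 * (norm x)^2 \<le> f x" for x
  proof (cases "x = 0")
    case True
    then show ?thesis using fnn by simp
  next
    case False
    let ?y = "(1 / norm x) *\<^sub>R x"
    have "?y \<in> sphere 0 1" using False by simp
    then have "f x0 \<le> f ?y" using x0 by blast
    also have "f ?y = f x / (norm x)^2" using hom[of "1 / norm x" x]
      by (simp add: power_divide)
    finally show ?thesis using False by (simp add: field_simps)
  qed
  have n1: "norm x0 = 1" using x0 by simp
  have "opt_lower_bound a K b L = f x0"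
    unfolding opt_lower_bound_def
  proof (rule Greatest_equality)
    show "0 \<le> f x0 \<and> (\<forall>x. f x0 * (norm x)\<^sup>2 \<le> frame_sum a K x + frame_sum b L x)"
      using fnn bound unfolding f_def by auto
  next
    fix C assume "0 \<le> C \<and> (\<forall>x. C * (norm x)\<^sup>2 \<le> frame_sum a K x + frame_sum b L x)"
    then have "C * (norm x0)^2 \<le> f x0" unfolding f_def by blast
    then show "C \<le> f x0" using n1 by simp
  qed
  then show ?thesis using that n1 bound unfolding f_def by blast
qed

theorem mainTheorem4:
  fixes a b :: "nat \<Rightarrow> complex^'d" and m n s :: nat and \<alpha> \<beta> :: real
  assumes "tight_frame a m \<alpha>" and "tight_frame b n \<beta>"
    and "s_order_incompatible a m \<alpha> b n \<beta> s"
  shows "C_s a m b n s > 0 \<and>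
    (let C = 1 / real_of_ereal (min (ereal \<alpha>) (min (ereal \<beta>) (C_s a m b n s)))
     in \<forall>S T (x :: complex^'d). S \<subseteq> {1..m} \<longrightarrow> T \<subseteq> {1..n} \<longrightarrow> card S + card T < s \<longrightarrow>
          (norm x)^2 \<le> C * (frame_sum a ({1..m} - S) x + frame_sum b ({1..n} - T) x))"
proof -
  have al: "\<alpha> > 0" "\<And>x. frame_sum a {1..m} x = \<alpha> * (norm x)^2"
    using assms(1) unfolding tight_frame_def by auto
  have be: "\<beta> > 0" "\<And>x. frame_sum b {1..n} x = \<beta> * (norm x)^2"
    using assms(2) unfolding tight_frame_def by auto
  have inc: "\<And>S T x. S \<subseteq> {1..m} \<Longrightarrow> T \<subseteq> {1..n} \<Longrightarrow> S \<noteq> {} \<Longrightarrow> T \<noteq> {} \<Longrightarrow>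
      card S + card T < s \<Longrightarrow> x \<noteq> 0 \<Longrightarrow>
      \<not> (frame_sum a S x = \<alpha> * (norm x)^2 \<and> frame_sum b T x = \<beta> * (norm x)^2)"
    using assms(3) unfolding s_order_incompatible_def by blast
  define P where "P = {(S, T). S \<subseteq> {1..m} \<and> T \<subseteq> {1..n} \<and> S \<noteq> {} \<and> T \<noteq> {} \<and> card S + card T < s}"
  have splitdiff: "frame_sum c K x = frame_sum c A x - frame_sum c (A - K) x"
    if "K \<subseteq> A" "finite A" for c K A x
    unfolding frame_sum_def using sum_diff[OF that(2), of "A - K"] that by (simp add: Diff_Diff_Int Int_absorb1)
  have pos: "C_ST a m b n S T > 0" if "(S, T) \<in> P" for S T
  proof -
    have ST: "S \<subseteq> {1..m}" "T \<subseteq> {1..n}" "S \<noteq> {}" "T \<noteq> {}" "card S + card T < s"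
      using that unfolding P_def by auto
    obtain x0 where x0: "norm x0 = 1"
      "opt_lower_bound a ({1..m} - S) b ({1..n} - T) = frame_sum a ({1..m} - S) x0 + frame_sum b ({1..n} - T) x0"
      using opt_lb by blast
    show ?thesis
    proof (rule ccontr)
      assume "\<not> ?thesis"
      then have "frame_sum a ({1..m} - S) x0 + frame_sum b ({1..n} - T) x0 \<le> 0"
        using x0 unfolding C_ST_def by simp
      then have z: "frame_sum a ({1..m} - S) x0 = 0" "frame_sum b ({1..n} - T) x0 = 0"
        using frame_sum_nonneg[of a "{1..m} - S" x0] frame_sum_nonneg[of b "{1..n} - T" x0] by linarith+
      have "frame_sum a S x0 = \<alpha> * (norm x0)^2"
        using splitdiff[OF ST(1), of a x0] z al(2) by simp
      moreover have "frame_sum b T x0 = \<beta> * (norm x0)^2"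
        using splitdiff[OF ST(2), of b x0] z be(2) by simp
      moreover have "x0 \<noteq> 0" using x0 by auto
      ultimately show False using inc[OF ST] by blast
    qed
  qed
  have finP: "finite P"
  proof -
    have "P \<subseteq> Pow {1..m} \<times> Pow {1..n}" unfolding P_def by auto
    then show ?thesis by (rule finite_subset) auto
  qed
  have Cs: "C_s a m b n s = (if P = {} then \<infinity> else Min ((\<lambda>(S, T). ereal (C_ST a m b n S T)) ` P))"
    unfolding C_s_def P_def Let_def by simp
  have Cspos: "C_s a m b n s > 0"
  proof (cases "P = {}")
    case True then show ?thesis using Cs by simp
  next
    case False
    have "0 < Min ((\<lambda>(S, T). ereal (C_ST a m b n S T)) ` P)"
      using finP False pos by (subst Min_gr_iff) auto
    then show ?thesis using Cs False by simp
  qed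
  have Csle: "C_s a m b n s \<le> ereal (C_ST a m b n S T)" if "(S, T) \<in> P" for S T
  proof -
    have "P \<noteq> {}" using that by auto
    then show ?thesis using Cs finP that by (auto intro: Min_le)
  qed
  define \<mu> where "\<mu> = real_of_ereal (min (ereal \<alpha>) (min (ereal \<beta>) (C_s a m b n s)))"
  have mu: "\<mu> > 0 \<and> \<mu> \<le> \<alpha> \<and> \<mu> \<le> \<beta> \<and> (\<forall>S T. (S, T) \<in> P \<longrightarrow> \<mu> \<le> C_ST a m b n S T)"
  proof (cases "C_s a m b n s")
    case (real c)
    then have "c > 0" using Cspos by simp
    moreover have "\<mu> = min \<alpha> (min \<beta> c)" unfolding \<mu>_def real by (simp add: min_def)
    moreover have "c \<le> C_ST a m b n S T" if "(S, T) \<in> P" for S T using Csle[OF that] real by simp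
    ultimately show ?thesis using al be by (smt (verit))
  next
    case PInf
    have "P = {}"
    proof (rule ccontr)
      assume "P \<noteq> {}"
      then obtain S T where "(S, T) \<in> P" by auto
      from Csle[OF this] PInf show False by simp
    qed
    moreover have "\<mu> = min \<alpha> \<beta>" unfolding \<mu>_def PInf by (simp add: min_def)
    ultimately show ?thesis using al be by auto
  next
    case MInf then show ?thesis using Cspos by simp
  qed
  have main: "(norm x)^2 \<le> (1 / \<mu>) * (frame_sum a ({1..m} - S) x + frame_sum b ({1..n} - T) x)"
    if ST: "S \<subseteq> {1..m}" "T \<subseteq> {1..n}" "card S + card T < s" for S T and x :: "complex^'d"
  proof -
    have key: "\<mu> * (norm x)^2 \<le> frame_sum a ({1..m} - S) x + frame_sum b ({1..n} - T) x"
    proof (cases "S = {}")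
      case True
      have "\<mu> * (norm x)^2 \<le> \<alpha> * (norm x)^2" using mu by (simp add: mult_right_mono)
      then show ?thesis using True al(2)[of x] frame_sum_nonneg[of b "{1..n} - T" x] by simp
    next
      case SF: False
      show ?thesis
      proof (cases "T = {}")
        case True
        have "\<mu> * (norm x)^2 \<le> \<beta> * (norm x)^2" using mu by (simp add: mult_right_mono)
        then show ?thesis using True be(2)[of x] frame_sum_nonneg[of a "{1..m} - S" x] by simp
      next
        case False
        have inP: "(S, T) \<in> P" unfolding P_def using ST SF False by auto
        obtain x0 where x0: "norm x0 = 1"
          "opt_lower_bound a ({1..m} - S) b ({1..n} - T) = frame_sum a ({1..m} - S) x0 + frame_sum b ({1..n} - T) x0"
          "\<forall>x. (frame_sum a ({1..m} - S) x0 + frame_sum b ({1..n} - T) x0) * (norm x)^2 \<le> frame_sum a ({1..m} - S) x + frame_sum b ({1..n} - T) x"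
          using opt_lb by blast
        have "\<mu> \<le> C_ST a m b n S T" using mu inP by blast
        then have "\<mu> \<le> frame_sum a ({1..m} - S) x0 + frame_sum b ({1..n} - T) x0"
          using x0(2) unfolding C_ST_def by simp
        then have "\<mu> * (norm x)^2 \<le> (frame_sum a ({1..m} - S) x0 + frame_sum b ({1..n} - T) x0) * (norm x)^2"
          by (simp add: mult_right_mono)
        then show ?thesis using x0(3) by (meson order_trans)
      qed
    qed
    then show ?thesis using mu by (simp add: field_simps)
  qed
  show ?thesis using Cspos main unfolding \<mu>_def Let_def by blast
qed

end
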